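(* Let $A=A_1\cdots A_n$ be a string over $\Sigma$, $\mathcal R\subseteq\Sigma\times\Sigma$, $B\ge1$, and let $G=(V,E)$ be the graph defined below. Then for every $i\in\{1,\dots,n\}$ and every $v\in V$, at least one of $V_{-v}\cap S_i=\emptyset$, $V_{+v}\cap S_i=\emptyset$, or $v\in S_i$ holds. Moreover, for every $v\in V$, the number of indices $i\in\{1,\dots,n\}$ with both $V_{-v}\cap S_i\ne\emptyset$ and $V_{+v}\cap S_i\neq\emptyset$ is at most $6B$.
   Context: An interval is a set of integers $[a,b]=\{a,\dots,b\}$ with $a\le b$, with endpoints $l([a,b])=a$, $r([a,b])=b$. A pseudo-interval is an interval or $\emptyset$. A pseudo-interval $I'$ is strictly inside an interval $I$ if $I'\subseteq I$ and $\{l(I),r(I)\}\cap I'=\emptyset$. A triple $(I,H,L)$ of pseudo-intervals is well-ordered if (a) $I\ne\emptyset$, $l(I)<r(I)$; (b) $H\neq\emptyset$, $l(H)<r(H)$; (c) $H$ and $L$ are strictly inside $I$; (d) $H\cap L=\emptyset$. For well-ordered triples, $(I,H,L)\preceq(I',H',L')$ iff $(I,H,L)=(I',H',L')$, or $I'\subseteq H$, or ($I=I'$, $H=H'$, $L=\emptyset$), or ($I=I'$, $H=H'$, $L\ne\emptyset\ne L'$, $r(L)<l(L')$); write $x\prec y$ if $x\preceq y$ and $x\neq y$. The vertex set $V$ consists of all lists $((I_1,H_1,L_1),\dots,(I_k,H_k,L_k))$ of well-ordered triples with $1\le k\le B$ such that: (i) $I_j\subseteq[0,n+1]$ and $H_j,L_j\subseteq[1,n]$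 for all $j$; (ii) $(A_{l(H_j)},A_{r(H_j)})\in\mathcal R$ for all $j$; (iii) $(A_{l(L_j)},A_{r(L_j)})\in\mathcal R$ for all $j$ with $L_j\ne\emptyset$; (iv) $I_{j'}\subseteq L_j$ for all $j<j'$. A list $v=(x_1,\dots,x_k)$ is lexicographically strictly smaller than $v'=(x'_1,\dots,x'_{k'})$ if $v$ is a proper prefix of $v'$, or $x_j\prec x'_j$ for the first index $j$ with $x_j\ne x'_j$. $E=\{(v,v'):v \text{ is lexicographically strictly smaller than } v'\}$. For $v\in V$, $V_{-v}=\{u\in V:(u,v)\in E\}$ and $V_{+v}=\{u\in V:(v,u)\in E\}$. For $i\in\{1,\dots,n\}$, $S_i$ is the set of vertices $((I_1,H_1,L_1),\dots,(I_k,H_k,L_k))\in V$ such that $i$ is an endpoint of at least one of the nonempty pseudo-intervals $I_1,H_1,L_1,\dots,I_k,H_k,L_k$. *)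

theory Defs
  imports Main
begin

type_synonym pint = "int set"
type_synonym triple = "pint \<times> pint \<times> pint"

definition is_interval :: "pint \<Rightarrow> bool" where
  "is_interval I \<longleftrightarrow> (\<exists>a b. a \<le> b \<and> I = {a..b})"

definition pseudo_interval :: "pint \<Rightarrow> bool" where
  "pseudo_interval I \<longleftrightarrow> I = {} \<or> is_interval I"

definition lep :: "pint \<Rightarrow> int" where "lep I = Min I"
definition rep :: "pint \<Rightarrow> int" where "rep I = Max I"

definition strictly_inside :: "pint \<Rightarrow> pint \<Rightarrow> bool" where
  "strictly_inside I' I \<longleftrightarrow> I' \<subseteq> I \<and> {lep I, rep I} \<inter> I' = {}"

definition well_ordered :: "triple \<Rightarrow> bool" where
  "well_ordered t = (case t of (I, H, L) \<Rightarrow>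
     pseudo_interval I \<and> pseudo_interval H \<and> pseudo_interval L \<and>
     I \<noteq> {} \<and> lep I < rep I \<and>
     H \<noteq> {} \<and> lep H < rep H \<and>
     strictly_inside H I \<and> strictly_inside L I \<and>
     H \<inter> L = {})"

definition preceq :: "triple \<Rightarrow> triple \<Rightarrow> bool" where
  "preceq t t' = (case t of (I, H, L) \<Rightarrow> case t' of (I', H', L') \<Rightarrow>
     t = t' \<or> I' \<subseteq> H \<or> (I = I' \<and> H = H' \<and> L = {}) \<or>
     (I = I' \<and> H = H' \<and> L \<noteq> {} \<and> L' \<noteq> {} \<and> rep L < lep L'))"

definition prec :: "triple \<Rightarrow> triple \<Rightarrow> bool" where
  "prec t t' \<longleftrightarrow> preceq t t' \<and> t \<noteq> t'"

text \<open>The string A = A_1 ... A_n is a list; A_i is A ! (i - 1).\<close>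
definition chr :: "'a list \<Rightarrow> int \<Rightarrow> 'a" where
  "chr A i = A ! (nat i - 1)"

definition fstI :: "triple \<Rightarrow> pint" where "fstI t = fst t"
definition sndH :: "triple \<Rightarrow> pint" where "sndH t = fst (snd t)"
definition thdL :: "triple \<Rightarrow> pint" where "thdL t = snd (snd t)"

definition vertices :: "'a list \<Rightarrow> ('a \<times> 'a) set \<Rightarrow> nat \<Rightarrow> triple list set" where
  "vertices A R B = {xs. 1 \<le> length xs \<and> length xs \<le> B \<and>
     (\<forall>j < length xs. well_ordered (xs ! j)) \<and>
     (\<forall>j < length xs. fstI (xs ! j) \<subseteq> {0..int (length A) + 1} \<and>
                      sndH (xs ! j) \<subseteq> {1..int (length A)} \<and>
                      thdL (xs ! j) \<subseteq> {1..int (length A)}) \<and>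
     (\<forall>j < length xs. (chr A (lep (sndH (xs ! j))), chr A (rep (sndH (xs ! j)))) \<in> R) \<and>
     (\<forall>j < length xs. thdL (xs ! j) \<noteq> {} \<longrightarrow>
          (chr A (lep (thdL (xs ! j))), chr A (rep (thdL (xs ! j)))) \<in> R) \<and>
     (\<forall>j j'. j < j' \<and> j' < length xs \<longrightarrow> fstI (xs ! j') \<subseteq> thdL (xs ! j))}"

definition lex_less :: "triple list \<Rightarrow> triple list \<Rightarrow> bool" where
  "lex_less v v' \<longleftrightarrow>
     (length v < length v' \<and> v = take (length v) v') \<or>
     (\<exists>j < min (length v) (length v'). take j v = take j v' \<and> v ! j \<noteq> v' ! j \<and>
        prec (v ! j) (v' ! j))"

definition edges :: "'a list \<Rightarrow> ('a \<times> 'a) set \<Rightarrow> nat \<Rightarrow> (triple list \<times> triple list) set" where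
  "edges A R B = {(v, v'). v \<in> vertices A R B \<and> v' \<in> vertices A R B \<and> lex_less v v'}"

definition Vminus :: "'a list \<Rightarrow> ('a \<times> 'a) set \<Rightarrow> nat \<Rightarrow> triple list \<Rightarrow> triple list set" where
  "Vminus A R B v = {u \<in> vertices A R B. (u, v) \<in> edges A R B}"

definition Vplus :: "'a list \<Rightarrow> ('a \<times> 'a) set \<Rightarrow> nat \<Rightarrow> triple list \<Rightarrow> triple list set" where
  "Vplus A R B v = {u \<in> vertices A R B. (v, u) \<in> edges A R B}"

definition endpoint_of :: "int \<Rightarrow> pint \<Rightarrow> bool" where
  "endpoint_of i X \<longleftrightarrow> X \<noteq> {} \<and> (i = lep X \<or> i = rep X)"

definition Sset :: "'a list \<Rightarrow> ('a \<times> 'a) set \<Rightarrow> nat \<Rightarrow> int \<Rightarrow> triple list set" where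
  "Sset A R B i = {xs \<in> vertices A R B. \<exists>j < length xs.
      endpoint_of i (fstI (xs ! j)) \<or> endpoint_of i (sndH (xs ! j)) \<or> endpoint_of i (thdL (xs ! j))}"

end

theory Submission imports Defs begin

definition ep :: "int \<Rightarrow> triple \<Rightarrow> bool" where
  "ep i t \<longleftrightarrow> endpoint_of i (fstI t) \<or> endpoint_of i (sndH t) \<or> endpoint_of i (thdL t)"

definition inS :: "int \<Rightarrow> triple list \<Rightarrow> bool" where
  "inS i v \<longleftrightarrow> (\<exists>j<length v. ep i (v!j))"

lemma Sset_eq: "Sset A R B i = {v \<in> vertices A R B. inS i v}"
  unfolding Sset_def inS_def ep_def by blast

lemma pi_finite: "pseudo_interval X \<Longrightarrow> finite X"
  unfolding pseudo_interval_def is_interval_def by auto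

lemma wo_facts:
  assumes "well_ordered t"
  shows "fstI t \<noteq> {}" "sndH t \<subseteq> fstI t" "thdL t \<subseteq> fstI t" "sndH t \<inter> thdL t = {}"
    "lep (fstI t) \<notin> sndH t" "rep (fstI t) \<notin> sndH t"
    "finite (fstI t)" "finite (sndH t)" "finite (thdL t)" "sndH t \<noteq> {}"
proof -
  obtain I H L where t: "t = (I,H,L)" by (cases t) auto
  from assms show "fstI t \<noteq> {}" "sndH t \<subseteq> fstI t" "thdL t \<subseteq> fstI t" "sndH t \<inter> thdL t = {}"
    "lep (fstI t) \<notin> sndH t" "rep (fstI t) \<notin> sndH t"
    "finite (fstI t)" "finite (sndH t)" "finite (thdL t)" "sndH t \<noteq> {}"
    unfolding t well_ordered_def fstI_def sndH_def thdL_def strictly_inside_def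
    using pi_finite by auto
qed

lemma endp_in: "finite X \<Longrightarrow> endpoint_of x X \<Longrightarrow> x \<in> X"
  unfolding endpoint_of_def lep_def rep_def using Min_in Max_in by blast

lemma ep_in: "well_ordered t \<Longrightarrow> ep i t \<Longrightarrow> i \<in> fstI t"
  using wo_facts[of t] endp_in unfolding ep_def by blast

lemma vert_facts:
  assumes "v \<in> vertices A R B"
  shows "\<And>j. j < length v \<Longrightarrow> well_ordered (v!j)"
    "\<And>a b. a < b \<Longrightarrow> b < length v \<Longrightarrow> fstI (v!b) \<subseteq> thdL (v!a)"
    "length v \<ge> 1" "length v \<le> B"
proof -
  have D: "1 \<le> length v \<and> length v \<le> B \<and> (\<forall>j < length v. well_ordered (v ! j)) \<and>
     (\<forall>j j'. j < j' \<and> j' < length v \<longrightarrow> fstI (v ! j') \<subseteq> thdL (v ! j))"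
    using assms unfolding vertices_def mem_Collect_eq by (elim conjE) (intro conjI; assumption)
  show "\<And>j. j < length v \<Longrightarrow> well_ordered (v!j)" using D by blast
  show "\<And>a b. a < b \<Longrightarrow> b < length v \<Longrightarrow> fstI (v!b) \<subseteq> thdL (v!a)" using D by blast
  show "length v \<ge> 1" "length v \<le> B" using D by auto
qed

lemma vert_down:
  assumes "v \<in> vertices A R B" "a \<le> b" "b < length v" "x \<in> fstI (v!b)"
  shows "x \<in> fstI (v!a)"
proof (cases "a = b")
  case False
  then have "a < b" using assms by auto
  then have "x \<in> thdL (v!a)" using vert_facts(2)[OF assms(1) \<open>a < b\<close> assms(3)] assms(4) by blast
  moreover have "well_ordered (v!a)" using vert_facts(1)[OF assms(1)] \<open>a < b\<close> assms(3) by simp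
  ultimately show ?thesis using wo_facts(3) by blast
qed (use assms in auto)

lemma lex_cases:
  assumes "lex_less u v"
  obtains (pre) "length u < length v" "u = take (length u) v"
  | (diff) j where "j < length u" "j < length v" "\<And>a. a < j \<Longrightarrow> u!a = v!a" "u!j \<noteq> v!j" "prec (u!j) (v!j)"
proof -
  { assume "\<not> (length u < length v \<and> u = take (length u) v)"
    then obtain j where j: "j < min (length u) (length v)" "take j u = take j v" "u!j \<noteq> v!j" "prec (u!j) (v!j)"
      using assms unfolding lex_less_def by blast
    have "\<And>a. a < j \<Longrightarrow> u!a = v!a"
      by (metis j(2) nth_take)
    then have thesis using diff j by auto }
  then show thesis using pre by blast
qed

lemma prec_cases:
  assumes "prec t t'"
  obtains (N) "fstI t' \<subseteq> sndH t"
  | (E) "fstI t = fstI t'" "sndH t = sndH t'" "thdL t = {}"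
  | (S) "fstI t = fstI t'" "sndH t = sndH t'" "thdL t \<noteq> {}" "thdL t' \<noteq> {}" "rep (thdL t) < lep (thdL t')"
proof -
  obtain I H L where t: "t = (I,H,L)" by (cases t) auto
  obtain I' H' L' where t': "t' = (I',H',L')" by (cases t') auto
  show thesis using assms N E S unfolding prec_def preceq_def t t' fstI_def sndH_def thdL_def by auto
qed

lemma left_lem:
  assumes u: "u \<in> vertices A R B" and v: "v \<in> vertices A R B" and lt: "lex_less u v"
    and b: "b < length u" "ep i (u!b)" and nS: "\<not> inS i v"
  shows "\<exists>j<length v. (i \<notin> fstI (v!j) \<and> (j = 0 \<or> i \<in> thdL (v!(j-1)))) \<or>
     (i \<in> fstI (v!j) \<and> i \<notin> sndH (v!j) \<and> i \<notin> thdL (v!j) \<and> thdL (v!j) \<noteq> {} \<and> i < lep (thdL (v!j)))"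
  using lt
proof (cases rule: lex_cases)
  case pre
  then have "u!b = v!b" using b by (metis nth_take)
  then show ?thesis using b pre nS unfolding inS_def by auto
next
  case (diff j)
  have wu: "well_ordered (u!j)" using vert_facts(1)[OF u] diff by auto
  have wv: "well_ordered (v!j)" using vert_facts(1)[OF v] diff by auto
  have bj: "b \<ge> j"
  proof (rule ccontr)
    assume "\<not> b \<ge> j"
    then have "u!b = v!b" "b < length v" using diff by auto
    then show False using b nS unfolding inS_def by auto
  qed
  have iIb: "i \<in> fstI (u!b)" using ep_in vert_facts(1)[OF u] b by blast
  have iIu: "i \<in> fstI (u!j)" using vert_down[OF u bj b(1) iIb] .
  have tail: "b > j \<Longrightarrow> i \<in> thdL (u!j)" using vert_facts(2)[OF u, of j b] b iIb by auto
  have epj: "b = j \<Longrightarrow> ep i (u!j)" using b by simp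
  have prej: "j > 0 \<Longrightarrow> i \<in> thdL (v!(j-1))"
  proof -
    assume "j > 0"
    then have "i \<in> thdL (u!(j-1))" using vert_facts(2)[OF u, of "j-1" j] diff iIu by auto
    then show ?thesis using diff \<open>j > 0\<close> by simp
  qed
  have notv: "\<not> ep i (v!j)" using nS diff unfolding inS_def by auto
  from diff(5) show ?thesis
  proof (cases rule: prec_cases)
    case N
    have "i \<notin> fstI (v!j)"
    proof
      assume iv: "i \<in> fstI (v!j)"
      then have iH: "i \<in> sndH (u!j)" using N by auto
      show False
      proof (cases "b = j")
        case True
        then have "ep i (u!j)" using epj by simp
        then consider (I) "endpoint_of i (fstI (u!j))" | (H) "endpoint_of i (sndH (u!j))"
          | (L) "endpoint_of i (thdL (u!j))" unfolding ep_def by blast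
        then show False
        proof cases
          case I then show False using iH wo_facts(5,6)[OF wu] unfolding endpoint_of_def by auto
        next
          case L then show False using iH wo_facts(4,9)[OF wu] endp_in by blast
        next
          case H
          have ne: "fstI (v!j) \<noteq> {}" using wo_facts(1)[OF wv] .
          have f1: "finite (fstI (v!j))" "finite (sndH (u!j))" using wo_facts(7)[OF wv] wo_facts(8)[OF wu] by auto
          have "Min (sndH (u!j)) \<le> Min (fstI (v!j))" using Min_antimono[OF N ne f1(2)] .
          moreover have "Max (fstI (v!j)) \<le> Max (sndH (u!j))" using Max_mono[OF N ne f1(2)] .
          moreover have "Min (fstI (v!j)) \<le> i" "i \<le> Max (fstI (v!j))" using iv f1 by auto
          ultimately have "endpoint_of i (fstI (v!j))"
            using H ne unfolding endpoint_of_def lep_def rep_def by auto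
          then show False using notv unfolding ep_def by blast
        qed
      next
        case False
        then show False using tail bj iH wo_facts(4)[OF wu] by auto
      qed
    qed
    then show ?thesis using diff prej by blast
  next
    case E
    show ?thesis
    proof (cases "b = j")
      case True
      then have "ep i (u!j)" using epj by simp
      then have "ep i (v!j)" using E unfolding ep_def endpoint_of_def by auto
      then show ?thesis using notv by blast
    next
      case False then show ?thesis using tail bj E by auto
    qed
  next
    case S
    have iL: "i \<in> thdL (u!j)"
    proof (cases "b = j")
      case True
      then have "ep i (u!j)" using epj by simp
      moreover have "\<not> endpoint_of i (fstI (u!j))" "\<not> endpoint_of i (sndH (u!j))"
        using notv S unfolding ep_def by auto
      ultimately show ?thesis using endp_in wo_facts(9)[OF wu] unfolding ep_def by blast
    next
      case False then show ?thesis using tail bj by auto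
    qed
    have "i \<le> rep (thdL (u!j))" using iL wo_facts(9)[OF wu] unfolding rep_def by auto
    then have lt2: "i < lep (thdL (v!j))" using S by auto
    have "i \<notin> thdL (v!j)" using lt2 wo_facts(9)[OF wv] unfolding lep_def
      using Min_le by fastforce
    moreover have "i \<in> fstI (v!j)" using iL wo_facts(3)[OF wu] S by auto
    moreover have "i \<notin> sndH (v!j)" using iL wo_facts(4)[OF wu] S by auto
    ultimately show ?thesis using diff S lt2 by blast
  qed
qed

lemma right_lem:
  assumes v: "v \<in> vertices A R B" and w: "w \<in> vertices A R B" and lt: "lex_less v w"
    and b: "b < length w" "ep i (w!b)" and nS: "\<not> inS i v"
  shows "i \<in> thdL (v!(length v - 1)) \<or> (\<exists>j<length v. i \<in> sndH (v!j) \<or>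
     (i \<in> fstI (v!j) \<and> i \<notin> thdL (v!j) \<and> (thdL (v!j) = {} \<or> rep (thdL (v!j)) < i)))"
  using lt
proof (cases rule: lex_cases)
  case pre
  have bk: "b \<ge> length v"
  proof (rule ccontr)
    assume "\<not> b \<ge> length v"
    then have bl: "b < length v" by simp
    have "v!b = take (length v) w ! b" using pre(2) by simp
    also have "\<dots> = w!b" using bl by simp
    finally have "v!b = w!b" .
    note bl this
    then show False using b nS unfolding inS_def by auto
  qed
  have k1: "length v \<ge> 1" using vert_facts(3)[OF v] .
  have iIb: "i \<in> fstI (w!b)" using ep_in vert_facts(1)[OF w] b by blast
  have lb: "length v - 1 < b" using bk k1 by simp
  have "i \<in> thdL (w!(length v - 1))" using vert_facts(2)[OF w lb b(1)] iIb by blast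
  moreover have "w!(length v - 1) = v!(length v - 1)"
  proof -
    have "length v - 1 < length v" using k1 by simp
    then have "take (length v) w ! (length v - 1) = w ! (length v - 1)" by simp
    then show ?thesis using pre(2) by simp
  qed
  ultimately show ?thesis by simp
next
  case (diff j)
  have wv: "well_ordered (v!j)" using vert_facts(1)[OF v] diff by auto
  have ww: "well_ordered (w!j)" using vert_facts(1)[OF w] diff by auto
  have bj: "b \<ge> j"
  proof (rule ccontr)
    assume "\<not> b \<ge> j"
    then have "v!b = w!b" "b < length v" using diff by auto
    then show False using b nS unfolding inS_def by auto
  qed
  have iIb: "i \<in> fstI (w!b)" using ep_in vert_facts(1)[OF w] b by blast
  have iIw: "i \<in> fstI (w!j)" using vert_down[OF w bj b(1) iIb] .
  have tail: "b > j \<Longrightarrow> i \<in> thdL (w!j)" using vert_facts(2)[OF w, of j b] b iIb by auto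
  have epj: "b = j \<Longrightarrow> ep i (w!j)" using b by simp
  have notv: "\<not> ep i (v!j)" using nS diff unfolding inS_def by auto
  from diff(5) show ?thesis
  proof (cases rule: prec_cases)
    case N
    then show ?thesis using iIw diff by blast
  next
    case E
    have iL: "i \<in> thdL (w!j)"
    proof (cases "b = j")
      case True
      then have "ep i (w!j)" using epj by simp
      moreover have "\<not> endpoint_of i (fstI (w!j))" "\<not> endpoint_of i (sndH (w!j))"
        using notv E unfolding ep_def by auto
      ultimately show ?thesis using endp_in wo_facts(9)[OF ww] unfolding ep_def by blast
    next
      case False then show ?thesis using tail bj by auto
    qed
    then have "i \<in> fstI (v!j)" using wo_facts(3)[OF ww] E by auto
    then show ?thesis using E diff by blast
  next
    case S
    have iL: "i \<in> thdL (w!j)"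
    proof (cases "b = j")
      case True
      then have "ep i (w!j)" using epj by simp
      moreover have "\<not> endpoint_of i (fstI (w!j))" "\<not> endpoint_of i (sndH (w!j))"
        using notv S unfolding ep_def by auto
      ultimately show ?thesis using endp_in wo_facts(9)[OF ww] unfolding ep_def by blast
    next
      case False then show ?thesis using tail bj by auto
    qed
    have "lep (thdL (w!j)) \<le> i" using iL wo_facts(9)[OF ww] unfolding lep_def by auto
    then have lt2: "rep (thdL (v!j)) < i" using S by auto
    have "i \<notin> thdL (v!j)" using lt2 wo_facts(9)[OF wv] unfolding rep_def
      using Max_ge by fastforce
    moreover have "i \<in> fstI (v!j)" using iL wo_facts(3)[OF ww] S by auto
    ultimately show ?thesis using diff S lt2 by blast
  qed
qed

lemma combine:
  assumes v: "v \<in> vertices A R B"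
    and jl: "j < length v"
    and Lc: "(i \<notin> fstI (v!j) \<and> (j = 0 \<or> i \<in> thdL (v!(j-1)))) \<or>
     (i \<in> fstI (v!j) \<and> i \<notin> sndH (v!j) \<and> i \<notin> thdL (v!j) \<and> thdL (v!j) \<noteq> {} \<and> i < lep (thdL (v!j)))"
    and Rc: "i \<in> thdL (v!(length v - 1)) \<or> (\<exists>j<length v. i \<in> sndH (v!j) \<or>
     (i \<in> fstI (v!j) \<and> i \<notin> thdL (v!j) \<and> (thdL (v!j) = {} \<or> rep (thdL (v!j)) < i)))"
  shows False
proof -
  define k where "k = length v"
  have k1: "k \<ge> 1" using vert_facts(3)[OF v] k_def by simp
  have sep: "\<And>a b x. a < b \<Longrightarrow> b < k \<Longrightarrow> x \<in> fstI (v!b) \<Longrightarrow> x \<in> thdL (v!a)"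
    using vert_facts(2)[OF v] k_def by blast
  have wo: "\<And>a. a < k \<Longrightarrow> well_ordered (v!a)" using vert_facts(1)[OF v] k_def by blast
  have LI: "\<And>a x. a < k \<Longrightarrow> x \<in> thdL (v!a) \<Longrightarrow> x \<in> fstI (v!a)" using wo wo_facts(3) by blast
  have HI: "\<And>a x. a < k \<Longrightarrow> x \<in> sndH (v!a) \<Longrightarrow> x \<in> fstI (v!a)" using wo wo_facts(2) by blast
  have HL: "\<And>a x. a < k \<Longrightarrow> x \<in> sndH (v!a) \<Longrightarrow> x \<notin> thdL (v!a)" using wo wo_facts(4) by blast
  have down: "\<And>a b x. a \<le> b \<Longrightarrow> b < k \<Longrightarrow> x \<in> fstI (v!b) \<Longrightarrow> x \<in> fstI (v!a)"
    using vert_down[OF v] k_def by blast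
  have jk: "j < k" using jl k_def by simp
  obtain m where mk: "m < k" and im: "i \<in> fstI (v!m)"
    and mcase: "(m = k - 1 \<and> i \<in> thdL (v!m)) \<or> (i \<notin> thdL (v!m) \<and> (i \<in> sndH (v!m) \<or> (thdL (v!m) = {} \<or> rep (thdL (v!m)) < i)))"
  proof -
    from Rc consider (P) "i \<in> thdL (v!(k - 1))" | (Q) m where "m < k" "i \<in> sndH (v!m) \<or>
     (i \<in> fstI (v!m) \<and> i \<notin> thdL (v!m) \<and> (thdL (v!m) = {} \<or> rep (thdL (v!m)) < i))"
      unfolding k_def by blast
    then show thesis
    proof cases
      case P then show thesis using that[of "k-1"] k1 LI by auto
    next
      case (Q m) then show thesis using that[of m] HI HL by blast
    qed
  qed
  have outside: "\<And>b. i \<notin> thdL (v!m) \<Longrightarrow> m < b \<Longrightarrow> b < k \<Longrightarrow> i \<notin> fstI (v!b)"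
    using sep by blast
  from Lc show False
  proof
    assume LN: "i \<notin> fstI (v!j) \<and> (j = 0 \<or> i \<in> thdL (v!(j-1)))"
    have "m < j" using LN down[of j m i] im mk by (cases "j \<le> m") auto
    then have "i \<in> thdL (v!(j-1))" using LN by auto
    show False
    proof (cases "m = k - 1 \<and> i \<in> thdL (v!m)")
      case True then show False using \<open>m < j\<close> jk by auto
    next
      case False
      then have nL: "i \<notin> thdL (v!m)" using mcase by auto
      show False
      proof (cases "j - 1 = m")
        case True then show False using nL \<open>i \<in> thdL (v!(j-1))\<close> by simp
      next
        case False
        then have "m < j - 1" using \<open>m < j\<close> by auto
        moreover have "j - 1 < k" using jk by simp
        ultimately show False using outside[OF nL, of "j-1"] LI[of "j-1" i] \<open>i \<in> thdL (v!(j-1))\<close> by blast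
      qed
    qed
  next
    assume LS: "i \<in> fstI (v!j) \<and> i \<notin> sndH (v!j) \<and> i \<notin> thdL (v!j) \<and> thdL (v!j) \<noteq> {} \<and> i < lep (thdL (v!j))"
    have jm: "\<not> j < m" using sep[of j m i] im mk LS by auto
    show False
    proof (cases "m = k - 1 \<and> i \<in> thdL (v!m)")
      case True then show False using jm jk LS by (cases "j = m") auto
    next
      case False
      then have nL: "i \<notin> thdL (v!m)" and alt: "i \<in> sndH (v!m) \<or> thdL (v!m) = {} \<or> rep (thdL (v!m)) < i"
        using mcase by auto
      have "\<not> m < j" using outside[OF nL, of j] jk LS by auto
      then have "j = m" using jm by auto
      have fin: "finite (thdL (v!j))" using wo_facts(9)[OF wo[OF jk]] .
      have "lep (thdL (v!j)) \<le> rep (thdL (v!j))" using LS fin unfolding lep_def rep_def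
        using Min_in[OF fin] Max_ge[OF fin] by blast
      then show False using alt LS \<open>j = m\<close> by auto
    qed
  qed
qed

lemma key:
  assumes v: "v \<in> vertices A R B" and um: "u \<in> Vminus A R B v" "u \<in> Sset A R B i"
    and wp: "w \<in> Vplus A R B v" "w \<in> Sset A R B i"
  shows "inS i v"
proof (rule ccontr)
  assume nS: "\<not> inS i v"
  have u: "u \<in> vertices A R B" "lex_less u v" using um unfolding Vminus_def edges_def by auto
  have w: "w \<in> vertices A R B" "lex_less v w" using wp unfolding Vplus_def edges_def by auto
  obtain b where b: "b < length u" "ep i (u!b)" using um(2) unfolding Sset_eq inS_def by auto
  obtain c where c: "c < length w" "ep i (w!c)" using wp(2) unfolding Sset_eq inS_def by auto
  obtain j where "j < length v" "(i \<notin> fstI (v!j) \<and> (j = 0 \<or> i \<in> thdL (v!(j-1)))) \<or>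
     (i \<in> fstI (v!j) \<and> i \<notin> sndH (v!j) \<and> i \<notin> thdL (v!j) \<and> thdL (v!j) \<noteq> {} \<and> i < lep (thdL (v!j)))"
    using left_lem[OF u(1) v u(2) b nS] by blast
  moreover have "i \<in> thdL (v!(length v - 1)) \<or> (\<exists>j<length v. i \<in> sndH (v!j) \<or>
     (i \<in> fstI (v!j) \<and> i \<notin> thdL (v!j) \<and> (thdL (v!j) = {} \<or> rep (thdL (v!j)) < i)))"
    using right_lem[OF v w(1) w(2) c nS] .
  ultimately show False using combine[OF v] by blast
qed

theorem lemma9:
  fixes A :: "'a list" and R :: "('a \<times> 'a) set" and B :: nat
  assumes "B \<ge> 1"
  shows "(\<forall>i \<in> {1..int (length A)}. \<forall>v \<in> vertices A R B.
            Vminus A R B v \<inter> Sset A R B i = {} \<or> Vplus A R B v \<inter> Sset A R B i = {} \<or>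
            v \<in> Sset A R B i) \<and>
         (\<forall>v \<in> vertices A R B.
            card {i \<in> {1..int (length A)}. Vminus A R B v \<inter> Sset A R B i \<noteq> {} \<and>
                                          Vplus A R B v \<inter> Sset A R B i \<noteq> {}} \<le> 6 * B)"
proof -
  have K: "\<And>v i. v \<in> vertices A R B \<Longrightarrow> Vminus A R B v \<inter> Sset A R B i \<noteq> {} \<Longrightarrow>
            Vplus A R B v \<inter> Sset A R B i \<noteq> {} \<Longrightarrow> inS i v"
    using key by blast
  show ?thesis
  proof
    show "\<forall>i \<in> {1..int (length A)}. \<forall>v \<in> vertices A R B.
            Vminus A R B v \<inter> Sset A R B i = {} \<or> Vplus A R B v \<inter> Sset A R B i = {} \<or>
            v \<in> Sset A R B i"
    proof (intro ballI)
      fix i v assume v: "v \<in> vertices A R B"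
      show "Vminus A R B v \<inter> Sset A R B i = {} \<or> Vplus A R B v \<inter> Sset A R B i = {} \<or>
            v \<in> Sset A R B i"
      proof (cases "Vminus A R B v \<inter> Sset A R B i = {} \<or> Vplus A R B v \<inter> Sset A R B i = {}")
        case True then show ?thesis by blast
      next
        case False
        then have "inS i v" using K[OF v] by blast
        then have "v \<in> Sset A R B i" using v unfolding Sset_eq by blast
        then show ?thesis by blast
      qed
    qed
  next
    show "\<forall>v \<in> vertices A R B.
            card {i \<in> {1..int (length A)}. Vminus A R B v \<inter> Sset A R B i \<noteq> {} \<and>
                                          Vplus A R B v \<inter> Sset A R B i \<noteq> {}} \<le> 6 * B"
    proof
      fix v assume v: "v \<in> vertices A R B"
      define F where "F = (\<lambda>j. set [lep (fstI (v!j)), rep (fstI (v!j)), lep (sndH (v!j)),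
                      rep (sndH (v!j)), lep (thdL (v!j)), rep (thdL (v!j))])"
      have sub: "{i \<in> {1..int (length A)}. Vminus A R B v \<inter> Sset A R B i \<noteq> {} \<and>
                                          Vplus A R B v \<inter> Sset A R B i \<noteq> {}} \<subseteq> (\<Union>j\<in>{..<length v}. F j)"
      proof
        fix i assume "i \<in> {i \<in> {1..int (length A)}. Vminus A R B v \<inter> Sset A R B i \<noteq> {} \<and>
                                          Vplus A R B v \<inter> Sset A R B i \<noteq> {}}"
        then have "inS i v" using K[OF v] by blast
        then obtain j where j: "j < length v" "ep i (v!j)" unfolding inS_def by blast
        have "i \<in> F j" using j(2) unfolding ep_def endpoint_of_def F_def set_simps by blast
        then show "i \<in> (\<Union>j\<in>{..<length v}. F j)" using j(1) by blast
      qed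
      have "card (\<Union>j\<in>{..<length v}. F j) \<le> (\<Sum>j\<in>{..<length v}. card (F j))"
        by (rule card_UN_le) simp
      also have "\<dots> \<le> (\<Sum>j\<in>{..<length v}. 6)"
      proof (rule sum_mono)
        fix j show "card (F j) \<le> 6" unfolding F_def by (rule order_trans[OF card_length]) simp
      qed
      also have "\<dots> = 6 * length v" by simp
      also have "\<dots> \<le> 6 * B" using vert_facts(4)[OF v] by simp
      finally have cU: "card (\<Union>j\<in>{..<length v}. F j) \<le> 6 * B" .
      show "card {i \<in> {1..int (length A)}. Vminus A R B v \<inter> Sset A R B i \<noteq> {} \<and>
                                          Vplus A R B v \<inter> Sset A R B i \<noteq> {}} \<le> 6 * B"
      proof -
        have "finite (\<Union>j\<in>{..<length v}. F j)" unfolding F_def by simp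
        then show ?thesis using card_mono[OF _ sub] cU by linarith
      qed
    qed
  qed
qed

end
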